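(* Assume condition (ii)' with $\zeta$ having a finite exponential moment ($\mathbb E e^{u\zeta}<\infty$ for some $u>0$). Let $a,\varepsilon>0$ with $1/2-\varepsilon>2a$. There exist $t_0>0$ and $c>0$ such that for all $t>t_0$, all $d\le t^a$, all $\gamma\in(0,1/2-2a-\varepsilon)$ and all $x\in W_{t,\varepsilon}$, \[\Delta(x)\ge\Big(1-\frac{c}{t^\gamma}\Big)h(x).\]
   Context: Likelihood ratio order $U\le_{lr}W$: $\mathbf P(U\in A)\mathbf P(W\in B)\ge\mathbf P(U\in B)\mathbf P(W\in A)$ for measurable $A,B$ with $\sup A\le\inf B$. Condition (ii)' for a real random variable $X$: there is $\zeta$ with values in $[1,\infty)$ such that for all $\theta\ge0$, $(X-\theta)\mid\{X>\theta\}\le_{lr}\zeta$ and $-(X+\theta)\mid\{X<-\theta\}\le_{lr}\zeta$. With $\zeta_1,\dots,\zeta_{d-1}$ i.i.d. copies of $\zeta$, $\eta_1=0$, $\eta_j=\sum_{i<j}\zeta_i$, define $h(x)=\mathbb E\big[\prod_{1\le i<j\le d}(x_j-x_i+\eta_j-\eta_i)\big]$ and $\Delta(x)=\prod_{1\le i<j\le d}(x_j-x_i)$. $W_{t,\varepsilon}=\{x\in\mathbb R^d:x_{j+1}-x_j>t^{1/2-\varepsilon},1\le j<d\}$. *)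

theory Defs
  imports "HOL-Probability.Probability"
begin

text \<open>Scaling mu by a positive constant does not change the relation, so
  the conditional law of a random variable given an event may be replaced by the
  restricted (unnormalised) law.\<close>
definition lr_le :: "(real set \<Rightarrow> real) \<Rightarrow> (real set \<Rightarrow> real) \<Rightarrow> bool" where
  "lr_le mu nu \<longleftrightarrow> (\<forall>A\<in>sets borel. \<forall>B\<in>sets borel.
      (\<forall>a\<in>A. \<forall>b\<in>B. a \<le> b) \<longrightarrow> mu A * nu B \<ge> mu B * nu A)"

text \<open>Condition (ii)': X a real random variable on probability space M, Z the law of zeta.\<close>
definition cond_ii' :: "'a measure \<Rightarrow> ('a \<Rightarrow> real) \<Rightarrow> real measure \<Rightarrow> bool" where
  "cond_ii' M X Z \<longleftrightarrow>
     (\<forall>\<theta>\<ge>0. lr_le (\<lambda>A. measure M {\<omega>\<in>space M. X \<omega> > \<theta> \<and> X \<omega> - \<theta> \<in> A}) (measure Z)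
            \<and> lr_le (\<lambda>A. measure M {\<omega>\<in>space M. X \<omega> < -\<theta> \<and> -(X \<omega> + \<theta>) \<in> A}) (measure Z))"

definition Delta :: "nat \<Rightarrow> (nat \<Rightarrow> real) \<Rightarrow> real" where
  "Delta d x = (\<Prod>j<d. \<Prod>i<j. x j - x i)"

definition eta :: "(nat \<Rightarrow> real) \<Rightarrow> nat \<Rightarrow> real" where
  "eta z j = (\<Sum>i<j. z i)"

definition h :: "real measure \<Rightarrow> nat \<Rightarrow> (nat \<Rightarrow> real) \<Rightarrow> real" where
  "h Z d x = integral\<^sup>L (PiM {..<d-1} (\<lambda>_. Z))
      (\<lambda>z. \<Prod>j<d. \<Prod>i<j. x j - x i + eta z j - eta z i)"

definition W :: "nat \<Rightarrow> real \<Rightarrow> real \<Rightarrow> (nat \<Rightarrow> real) set" where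
  "W d t \<epsilon> = {x. \<forall>j. j + 1 < d \<longrightarrow> x (j+1) - x j > t powr (1/2 - \<epsilon>)}"

end

theory Submission
  imports Defs
begin

lemma gap:
  assumes "x \<in> W d t \<epsilon>" "i \<le> j" "j < d"
  shows "x j - x i \<ge> real (j-i) * t powr (1/2-\<epsilon>)"
  using assms(2,3)
proof (induction j)
  case 0 then show ?case by simp
next
  case (Suc j)
  show ?case
  proof (cases "i = Suc j")
    case True then show ?thesis by simp
  next
    case False
    then have "i \<le> j" using Suc by simp
    with Suc have ih: "x j - x i \<ge> real (j-i) * t powr (1/2-\<epsilon>)" by simp
    have "x (Suc j) - x j > t powr (1/2-\<epsilon>)" using assms(1) Suc(3) by (auto simp: W_def)
    moreover have "real (Suc j - i) = real (j-i) + 1" using \<open>i \<le> j\<close> by simp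
    ultimately show ?thesis using ih by (simp add: algebra_simps)
  qed
qed

lemma eta_diff:
  assumes "i \<le> j" "j \<le> n"
  shows "\<bar>eta z j - eta z i\<bar> \<le> (\<Sum>k<n. if i \<le> k \<and> k < j then \<bar>z k\<bar> else 0)"
proof -
  have "eta z j = eta z i + (\<Sum>k\<in>{i..<j}. z k)"
    unfolding eta_def using assms(1)
    by (metis atLeast0LessThan le0 sum.atLeastLessThan_concat)
  then have "\<bar>eta z j - eta z i\<bar> \<le> (\<Sum>k\<in>{i..<j}. \<bar>z k\<bar>)" by (simp add: sum_abs)
  also have "\<dots> = (\<Sum>k<n. if i \<le> k \<and> k < j then \<bar>z k\<bar> else 0)"
    using assms by (subst sum.inter_filter[symmetric]) (auto intro!: sum.cong)
  finally show ?thesis .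
qed

lemma comb:
  "(\<Sum>j<d. \<Sum>i<j. if i \<le> k \<and> k < j then 1/real (j-i) else 0) \<le> real d"
proof -
  define S where "S = {(j,i). j<d \<and> i<j \<and> i\<le>k \<and> k<j}"
  define T where "T = (SIGMA L:{1..d}. {..<L})"
  define \<phi> where "\<phi> = (\<lambda>(j::nat,i::nat). (j-i, k-i))"
  have "(\<Sum>j<d. \<Sum>i<j. if i \<le> k \<and> k < j then 1/real (j-i) else 0)
      = (\<Sum>p\<in>(SIGMA j:{..<d}. {..<j}). if snd p \<le> k \<and> k < fst p then 1/real (fst p - snd p) else 0)"
    by (subst sum.Sigma) (auto intro!: sum.cong split: prod.splits)
  also have "\<dots> = (\<Sum>p\<in>S. 1/real (fst p - snd p))"
    by (subst sum.inter_filter[symmetric]) (auto simp: S_def intro!: sum.cong)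
  also have "\<dots> = (\<Sum>q\<in>\<phi> ` S. 1/real (fst q))"
  proof (subst sum.reindex)
    show "inj_on \<phi> S" by (auto simp: inj_on_def S_def \<phi>_def)
    show "(\<Sum>p\<in>S. 1 / real (fst p - snd p)) = sum ((\<lambda>q. 1 / real (fst q)) \<circ> \<phi>) S"
      by (auto simp: \<phi>_def intro!: sum.cong)
  qed
  also have "\<dots> \<le> (\<Sum>q\<in>T. 1/real (fst q))"
    by (rule sum_mono2) (auto simp: T_def S_def \<phi>_def)
  also have "\<dots> = (\<Sum>L\<in>{1..d}. \<Sum>i<L. 1/real L)"
    using sum.Sigma[of "{1..d}" "\<lambda>L. {..<L}" "\<lambda>L i. 1/real L"] by (simp add: T_def split_beta)
  also have "\<dots> = (\<Sum>L\<in>{1..d}. real L * (1/real L))"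
    by simp
  also have "\<dots> = real d" by simp
  finally show ?thesis .
qed

lemma pw:
  assumes x: "x \<in> W d t \<epsilon>" and t: "t > 0"
  shows "\<bar>\<Prod>j<d. \<Prod>i<j. x j - x i + eta z j - eta z i\<bar>
     \<le> Delta d x * exp (real d / t powr (1/2-\<epsilon>) * (\<Sum>k<d-1. \<bar>z k\<bar>))"
proof -
  define g where "g = t powr (1/2-\<epsilon>)"
  have g: "g > 0" using t by (simp add: g_def)
  define n where "n = d - 1"
  define w where "w = (\<lambda>j i k. if i \<le> k \<and> k < j then 1/real (j-i) else 0)"
  define R where "R = (\<lambda>j i. (\<Sum>k<n. \<bar>z k\<bar> * w j i k) / g)"
  have fac: "\<bar>x j - x i + eta z j - eta z i\<bar> \<le> (x j - x i) * exp (R j i)"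
    if ij: "i < j" "j < d" for i j
  proof -
    define D where "D = x j - x i"
    have D: "D \<ge> real (j-i) * g" using gap[OF x, of i j] ij by (simp add: D_def g_def)
    have jig: "real (j-i) * g > 0" using ij g by simp
    define E where "E = (\<Sum>k<n. if i \<le> k \<and> k < j then \<bar>z k\<bar> else 0)"
    have e: "\<bar>eta z j - eta z i\<bar> \<le> E" unfolding E_def using ij by (intro eta_diff) (auto simp: n_def)
    have E0: "E \<ge> 0" unfolding E_def by (intro sum_nonneg) auto
    have RE: "R j i = E / (real (j-i) * g)"
      unfolding R_def E_def w_def by (simp add: sum_divide_distrib sum_distrib_left) (intro sum.cong, auto)
    have abs1: "\<bar>x j - x i + eta z j - eta z i\<bar> \<le> D + E" using e D jig unfolding D_def by (smt (verit))
    have Dp: "D > 0" using D jig by linarith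
    have "D + E = D * (1 + E / D)" using Dp by (simp add: field_simps)
    also have "\<dots> \<le> D * (1 + R j i)"
      unfolding RE using D jig E0 Dp by (intro mult_left_mono add_left_mono frac_le) (auto simp del: of_nat_diff)
    finally have "\<bar>x j - x i + eta z j - eta z i\<bar> \<le> D * (1 + R j i)" using abs1 by linarith
    also have "\<dots> \<le> D * exp (R j i)"
      using Dp by (intro mult_left_mono) (auto simp: exp_ge_add_one_self add.commute)
    finally show ?thesis by (simp add: D_def)
  qed
  have "\<bar>\<Prod>j<d. \<Prod>i<j. x j - x i + eta z j - eta z i\<bar> = (\<Prod>j<d. \<Prod>i<j. \<bar>x j - x i + eta z j - eta z i\<bar>)"
    by (simp add: abs_prod)
  also have "\<dots> \<le> (\<Prod>j<d. \<Prod>i<j. (x j - x i) * exp (R j i))"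
    by (intro prod_mono conjI fac prod_nonneg) auto
  also have "\<dots> = Delta d x * exp (\<Sum>j<d. \<Sum>i<j. R j i)"
    by (simp add: Delta_def prod.distrib exp_sum)
  also have "\<dots> \<le> Delta d x * exp (real d / g * (\<Sum>k<d-1. \<bar>z k\<bar>))"
  proof (intro mult_left_mono)
    have "(\<Sum>j<d. \<Sum>i<j. R j i) = (\<Sum>k<n. \<bar>z k\<bar> * (\<Sum>j<d. \<Sum>i<j. w j i k)) / g"
      unfolding R_def by (simp add: sum_divide_distrib[symmetric] sum_distrib_left sum.swap[of _ "{..<n}"])
    also have "\<dots> \<le> (\<Sum>k<n. \<bar>z k\<bar> * real d) / g"
      using g by (intro divide_right_mono sum_mono mult_left_mono) (auto simp: w_def comb)
    also have "\<dots> = real d / g * (\<Sum>k<d-1. \<bar>z k\<bar>)"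
      by (simp add: n_def sum_distrib_left[symmetric] mult.commute)
    finally show "exp (\<Sum>j<d. \<Sum>i<j. R j i) \<le> exp (real d / g * (\<Sum>k<d-1. \<bar>z k\<bar>))" by simp
    show "0 \<le> Delta d x" unfolding Delta_def
      using gap[OF x] g by (intro prod_nonneg) (smt (verit, best) lessThan_iff mult_nonneg_nonneg of_nat_0_le_iff order.strict_implies_order order.strict_trans1 g_def)
  qed
  finally show ?thesis by (simp add: g_def)
qed




lemma exp_pt:
  fixes s u y :: real
  assumes "0 \<le> s" "s \<le> u/2" "u > 0"
  shows "exp (s*\<bar>y\<bar>) \<le> 1 + s * (2/u * exp (u*\<bar>y\<bar>))"
proof -
  define w where "w = \<bar>y\<bar>"
  have w: "w \<ge> 0" by (simp add: w_def)
  have "exp (s*w) - 1 \<le> s*w * exp (s*w)"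
  proof -
    have "exp (-(s*w)) \<ge> 1 - s*w" using exp_ge_add_one_self[of "-(s*w)"] by simp
    then have "exp (-(s*w)) * exp (s*w) \<ge> (1 - s*w) * exp (s*w)" by (intro mult_right_mono) auto
    then show ?thesis by (simp add: exp_minus field_simps)
  qed
  also have "\<dots> \<le> s * w * exp (u*w/2)"
  proof -
    have "s*w \<le> u*w/2" using mult_right_mono[of "s*2" u w] assms w by (simp add: field_simps)
    then show ?thesis using assms w by (intro mult_left_mono) auto
  qed
  also have "\<dots> \<le> s * (2/u * exp (u*w))"
  proof -
    have "u*w/2 \<le> exp (u*w/2)" using exp_ge_add_one_self[of "u*w/2"] by linarith
    have "w * exp (u*w/2) = (u*w/2) * (2/u * exp (u*w/2))" using assms by (simp add: field_simps)
    also have "\<dots> \<le> exp (u*w/2) * (2/u * exp (u*w/2))"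
      using \<open>u*w/2 \<le> exp (u*w/2)\<close> assms by (intro mult_right_mono) auto
    also have "\<dots> = 2/u * exp (u*w)" 
      using mult_exp_exp[of "u*w/2" "u*w/2"] by simp
    finally have "w * exp (u*w/2) \<le> 2/u * exp (u*w)" .
    then show ?thesis using assms mult_left_mono[of "w * exp (u*w/2)" "2/u * exp (u*w)" s]
      by (simp add: mult.assoc)
  qed
  finally show ?thesis by (simp add: w_def)
qed

lemma one_dim:
  fixes Z :: "real measure" and u s :: real
  assumes Z: "prob_space Z" "sets Z = sets borel" and u: "u > 0"
    and int: "integrable Z (\<lambda>y. exp (u*\<bar>y\<bar>))"
    and s: "0 \<le> s" "s \<le> u/2"
  shows "integrable Z (\<lambda>y. exp (s*\<bar>y\<bar>))"
    "(\<integral>y. exp (s*\<bar>y\<bar>) \<partial>Z) \<le> 1 + s * (2/u * (\<integral>y. exp (u*\<bar>y\<bar>) \<partial>Z))"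
proof -
  interpret prob_space Z by (rule Z)
  have meas: "(\<lambda>y. exp (s*\<bar>y\<bar>)) \<in> borel_measurable Z"
    by (subst measurable_cong_sets[OF Z(2) refl]) (intro borel_measurable_continuous_onI continuous_intros)
  have int2: "integrable Z (\<lambda>y. 1 + s * (2/u * exp (u*\<bar>y\<bar>)))"
    using int by auto
  show i: "integrable Z (\<lambda>y. exp (s*\<bar>y\<bar>))"
    by (rule Bochner_Integration.integrable_bound[OF int2 meas])
       (use exp_pt[OF s u] s u in \<open>auto intro!: AE_I2\<close>)
  have "(\<integral>y. exp (s*\<bar>y\<bar>) \<partial>Z) \<le> (\<integral>y. 1 + s * (2/u * exp (u*\<bar>y\<bar>)) \<partial>Z)"
    by (intro integral_mono i int2 exp_pt s u)
  also have "\<dots> = 1 + s * (2/u * (\<integral>y. exp (u*\<bar>y\<bar>) \<partial>Z))"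
    using int by (simp add: prob_space)
  finally show "(\<integral>y. exp (s*\<bar>y\<bar>) \<partial>Z) \<le> 1 + s * (2/u * (\<integral>y. exp (u*\<bar>y\<bar>) \<partial>Z))" .
qed



lemma eta_split: "i \<le> j \<Longrightarrow> eta z j - eta z i = (\<Sum>k\<in>{i..<j}. z k)"
  unfolding eta_def by (metis add_diff_cancel_left' atLeast0LessThan le0 sum.atLeastLessThan_concat)

lemma Delta_nonneg:
  assumes x: "x \<in> W d t \<epsilon>" and t: "t > 0"
  shows "0 \<le> Delta d x"
proof -
  have "x j - x i \<ge> 0" if "i < j" "j < d" for i j
    using gap[OF x, of i j] that t by (smt (verit) less_imp_le mult_nonneg_nonneg of_nat_0_le_iff powr_ge_zero)
  then show ?thesis unfolding Delta_def by (intro prod_nonneg) auto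
qed

lemma key:
  fixes Z :: "real measure" and u s t \<epsilon> :: real
  assumes Z: "prob_space Z" "sets Z = sets borel" "AE y in Z. 1 \<le> y" and u: "u > 0"
    and int: "integrable Z (\<lambda>y. exp (u*\<bar>y\<bar>))"
    and x: "x \<in> W d t \<epsilon>" and t: "t > 0"
    and s: "s = real d / t powr (1/2-\<epsilon>)" "s \<le> u/2"
  shows "h Z d x \<le> Delta d x * exp (real d * s * (2/u * (\<integral>y. exp (u*\<bar>y\<bar>) \<partial>Z)))"
    "0 \<le> h Z d x"
proof -
  define n where "n = d - 1"
  define P where "P = PiM {..<n} (\<lambda>_. Z)"
  define C where "C = 2/u * (\<integral>y. exp (u*\<bar>y\<bar>) \<partial>Z)"
  define E where "E = (\<integral>y. exp (s*\<bar>y\<bar>) \<partial>Z)"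
  define F where "F = (\<lambda>z. \<Prod>j<d. \<Prod>i<j. x j - x i + eta z j - eta z i)"
  define G where "G = (\<lambda>z. \<Prod>k\<in>{..<n}. exp (s*\<bar>z k\<bar>))"
  interpret PS: product_prob_space "\<lambda>_. Z" using product_prob_spaceI[of "\<lambda>_. Z"] Z(1) by simp
  have s0: "s \<ge> 0" using s t by simp
  have hF: "h Z d x = integral\<^sup>L P F" by (simp add: h_def P_def F_def n_def)
  have intE: "integrable Z (\<lambda>y. exp (s*\<bar>y\<bar>))" and Ebd: "E \<le> 1 + s * C"
    using one_dim[OF Z(1,2) u int s0 s(2)] by (auto simp: E_def C_def)
  have intG: "integrable P G" unfolding P_def G_def
    by (intro PS.product_integrable_prod intE) auto
  have intGv: "integral\<^sup>L P G = E ^ n" unfolding P_def G_def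
    by (subst PS.product_integral_prod) (auto intro: intE simp: E_def)
  have D0: "0 \<le> Delta d x" by (rule Delta_nonneg[OF x t])
  have FG: "F z \<le> Delta d x * G z" for z
  proof -
    have "F z \<le> \<bar>F z\<bar>" by simp
    also have "\<dots> \<le> Delta d x * exp (real d / t powr (1/2-\<epsilon>) * (\<Sum>k<d-1. \<bar>z k\<bar>))"
      unfolding F_def by (rule pw[OF x t])
    also have "exp (real d / t powr (1/2-\<epsilon>) * (\<Sum>k<d-1. \<bar>z k\<bar>)) = G z"
      unfolding G_def n_def s(1)[symmetric] by (simp add: sum_distrib_left exp_sum)
    finally show ?thesis .
  qed
  have "h Z d x \<le> integral\<^sup>L P (\<lambda>z. Delta d x * G z)"
  proof -
    have intDG: "integrable P (\<lambda>z. Delta d x * G z)" using intG by simp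
    show ?thesis unfolding hF
      by (intro integral_mono'[OF intDG] FG) (auto intro!: mult_nonneg_nonneg D0 simp: G_def prod_nonneg)
  qed
  also have "\<dots> = Delta d x * E ^ n" by (simp only: integral_mult_right_zero intGv)
  also have "\<dots> \<le> Delta d x * exp (real d * s * C)"
  proof (intro mult_left_mono D0)
    have E0: "0 \<le> E" unfolding E_def by (intro integral_nonneg_AE) auto
    have "E ^ n \<le> exp (s*C) ^ n"
      using E0 Ebd exp_ge_add_one_self[of "s*C"] by (intro power_mono) (linarith, simp)
    also have "\<dots> = exp (real n * (s*C))" by (simp add: exp_of_nat_mult)
    also have "\<dots> \<le> exp (real d * s * C)"
    proof -
      have C0: "C \<ge> 0" unfolding C_def using u by (intro mult_nonneg_nonneg integral_nonneg_AE) auto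
      have "real n \<le> real d" by (simp add: n_def)
      then show ?thesis using C0 s0 by (simp add: mult_right_mono mult.assoc mult_nonneg_nonneg)
    qed
    finally show "E ^ n \<le> exp (real d * s * C)" .
  qed
  finally show "h Z d x \<le> Delta d x * exp (real d * s * (2/u * (\<integral>y. exp (u*\<bar>y\<bar>) \<partial>Z)))"
    by (simp add: C_def)
  have AEP: "AE z in P. \<forall>k\<in>{..<n}. 1 \<le> z k"
    unfolding P_def by (intro AE_finite_allI AE_PiM_component Z(1) Z(3)) auto
  have "0 \<le> integral\<^sup>L P F"
  proof (intro integral_nonneg_AE, rule AE_mp[OF AEP], intro AE_I2 impI)
    fix z :: "nat \<Rightarrow> real" assume z: "\<forall>k\<in>{..<n}. 1 \<le> z k"
    have "0 \<le> x j - x i + eta z j - eta z i" if "i < j" "j < d" for i j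
    proof -
      have "x j - x i \<ge> 0"
        using gap[OF x, of i j] that t by (smt (verit) less_imp_le mult_nonneg_nonneg of_nat_0_le_iff powr_ge_zero)
      moreover have "eta z j - eta z i \<ge> 0"
    proof -
      have "\<forall>k\<in>{i..<j}. 0 \<le> z k"
      proof
        fix k assume "k \<in> {i..<j}"
        then have "k \<in> {..<n}" using that by (auto simp: n_def)
        from z[rule_format, OF this] show "0 \<le> z k" by linarith
      qed
      then show ?thesis using that by (subst eta_split) (auto intro!: sum_nonneg)
    qed
      ultimately show ?thesis by simp
    qed
    then show "0 \<le> F z" unfolding F_def by (intro prod_nonneg) auto
  qed
  then show "0 \<le> h Z d x" using hF by simp
qed



theorem lemma4p1:
  fixes M :: "'a measure" and X :: "'a \<Rightarrow> real" and Z :: "real measure"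
    and a \<epsilon> :: real
  assumes "prob_space M" and "X \<in> borel_measurable M"
    and "prob_space Z" and "sets Z = sets borel"
    and "AE z in Z. 1 \<le> z"
    and "cond_ii' M X Z"
    and "\<exists>u>0. integrable Z (\<lambda>z. exp (u * z))"
    and "a > 0" and "\<epsilon> > 0" and "1/2 - \<epsilon> > 2 * a"
  shows "\<exists>t0>0. \<exists>c>0. \<forall>t>t0. \<forall>d::nat. real d \<le> t powr a \<longrightarrow>
           (\<forall>\<gamma>. 0 < \<gamma> \<and> \<gamma> < 1/2 - 2*a - \<epsilon> \<longrightarrow>
             (\<forall>x\<in>W d t \<epsilon>. Delta d x \<ge> (1 - c / t powr \<gamma>) * h Z d x))"
proof -
  obtain u where u: "u > 0" and intu: "integrable Z (\<lambda>z. exp (u * z))" using assms(7) by blast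
  have meas: "(\<lambda>y. exp (v * \<bar>y\<bar>)) \<in> borel_measurable Z" "(\<lambda>y. exp (v * y)) \<in> borel_measurable Z" for v :: real
    by (subst measurable_cong_sets[OF assms(4) refl], intro borel_measurable_continuous_onI continuous_intros)+
  have int: "integrable Z (\<lambda>y. exp (u*\<bar>y\<bar>))"
  proof (subst integrable_cong_AE[OF meas(1) meas(2)])
    show "AE y in Z. exp (u * \<bar>y\<bar>) = exp (u * y)"
      using assms(5) by eventually_elim auto
  qed (rule intu)
  define b where "b = 1/2 - \<epsilon>"
  have ab: "b - a > 0" "b - 2*a > 0" using assms(8,10) by (auto simp: b_def)
  define C where "C = 2/u * (\<integral>y. exp (u*\<bar>y\<bar>) \<partial>Z)"
  have C0: "C \<ge> 0" unfolding C_def using u by (intro mult_nonneg_nonneg integral_nonneg_AE) auto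
  define t0 where "t0 = max 1 ((2/u) powr (1/(b-a)))"
  have t0p: "t0 > 0" by (simp add: t0_def)
  have cp: "C + 1 > 0" using C0 by simp
  have "\<forall>t>t0. \<forall>d::nat. real d \<le> t powr a \<longrightarrow>
           (\<forall>\<gamma>. 0 < \<gamma> \<and> \<gamma> < 1/2 - 2*a - \<epsilon> \<longrightarrow>
             (\<forall>x\<in>W d t \<epsilon>. Delta d x \<ge> (1 - (C+1) / t powr \<gamma>) * h Z d x))"
  proof (intro allI impI ballI)
    fix t :: real and d :: nat and \<gamma> :: real and x
    assume t: "t0 < t" and d: "real d \<le> t powr a" and g: "0 < \<gamma> \<and> \<gamma> < 1/2 - 2*a - \<epsilon>"
      and x: "x \<in> W d t \<epsilon>"
    have t1: "t > 1" "t > 0" using t by (auto simp: t0_def)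
    define s where "s = real d / t powr b"
    have "t powr (b-a) > 2/u"
    proof -
      have "(2/u) powr (1/(b-a)) < t" using t by (simp add: t0_def)
      then have "((2/u) powr (1/(b-a))) powr (b-a) < t powr (b-a)"
        using ab u by (intro powr_less_mono2) auto
      then show ?thesis using ab u by (simp add: powr_powr)
    qed
    have sle: "s \<le> t powr (a - b)"
      unfolding s_def using d t1 by (simp add: powr_diff divide_right_mono)
    have su: "s \<le> u/2"
    proof -
      have "t powr (a-b) = 1 / t powr (b-a)" by (simp add: powr_minus_divide[symmetric])
      also have "\<dots> \<le> u/2"
      proof -
        have tp: "t powr (b-a) > 0" using t1 by simp
        have "2 < u * t powr (b-a)" using \<open>t powr (b-a) > 2/u\<close> u by (simp add: field_simps)
        then show ?thesis using tp by (simp add: field_simps)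
      qed
      finally show ?thesis using sle by simp
    qed
    have K: "h Z d x \<le> Delta d x * exp (real d * s * C)" "0 \<le> h Z d x"
      using key[OF assms(3,4,5) u int x t1(2) _ su] by (auto simp: s_def b_def C_def)
    have D0: "0 \<le> Delta d x" by (rule Delta_nonneg[OF x t1(2)])
    define q where "q = (C+1) / t powr \<gamma>"
    have dsq: "real d * s * C \<le> q"
    proof -
      have "real d * s = real d ^ 2 / t powr b" by (simp add: s_def power2_eq_square)
      also have "\<dots> \<le> (t powr a) ^ 2 / t powr b"
        using d t1 by (intro divide_right_mono power_mono) auto
      also have "\<dots> = t powr (2*a - b)"
        using t1 by (simp add: powr_diff powr_realpow[symmetric] powr_powr mult.commute)
      also have "\<dots> \<le> t powr (-\<gamma>)"
        using t1 g by (intro powr_mono) (auto simp: b_def)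
      also have "\<dots> = 1 / t powr \<gamma>" by (simp add: powr_minus_divide)
      finally have "real d * s * C \<le> 1 / t powr \<gamma> * C" using C0 by (intro mult_right_mono)
      also have "\<dots> \<le> q" unfolding q_def using t1 by (simp add: divide_right_mono)
      finally show ?thesis .
    qed
    have "(1 - q) * h Z d x \<le> exp (-q) * h Z d x"
      using K(2) exp_ge_add_one_self[of "-q"] by (intro mult_right_mono) auto
    also have "\<dots> \<le> exp (-q) * (Delta d x * exp q)"
      using K D0 dsq by (intro mult_left_mono order.trans[OF K(1)] mult_left_mono) auto
    also have "\<dots> = Delta d x" by (simp add: exp_minus field_simps)
    finally show "(1 - (C+1) / t powr \<gamma>) * h Z d x \<le> Delta d x" by (simp add: q_def)
  qed
  then show ?thesis using t0p cp by blast
qed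

end
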